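(* (1) If $\mathfrak G$ is a descriptive $\multimap$-frame, then $\hat\sigma\mathfrak G$ is a descriptive S4K-frame. (2) If $\mathfrak F$ is a descriptive S4K-frame, then $\hat\rho\mathfrak F$ is a descriptive $\multimap$-frame.
   Context: General $\multimap$-frame $(X,\preceq,\sqsubset,P)$: $\preceq$ partial order, $x\preceq y\sqsubset z\Rightarrow x\sqsubset z$, $P$ a family of $\preceq$-upsets containing $X,\emptyset$, closed under $\cap,\cup$, $a\Rightarrow b=\{x\mid\forall y(x\preceq y,y\in a\Rightarrow y\in b)\}$, $a\Rrightarrow b=\{x\mid\forall y(x\sqsubset y,y\in a\Rightarrow y\in b)\}$. It is descriptive if compact (any subfamily of $P\cup\{X\setminus a\mid a\in P\}$ with the finite intersection property has nonempty intersection), $\preceq$-refined ($x\not\preceq y\Rightarrow\exists a\in P$, $x\in a$, $y\notin a$) and $\sqsubset$-refined (not $x\sqsubset y\Rightarrow\exists a,b\in P$ with $x\in a\Rrightarrow b$, $y\in a$, $y\notin b$). General S4K-frame $(X,R_i,R_m,P)$: $R_i$ preorder, $R_m$ binary relation, $P$ Boolean subalgebra of $\mathcal P(X)$ closed under $[i]a=\{x\mid\forall y(xR_iy\Rightarrow y\in a)\}$ and $[m]a$ (likewise with $R_m$). It is descriptive if differentiated ($x\ne y\Rightarrow\exists a\in P$, $x\in a$, $y\notin a$), tight (for $R\in\{R_i,R_m\}$: $xRy$ iff for all $a\in P$, $x\in[R]a$ implies $y\in a$) and compact (every subfamily of $P$ with the finite intersection property has nonempty intersection). $\hat\sigma(X,\preceq,\sqsubset,P):=(X,\preceq,\sqsubset,\hat\sigma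 P)$ with $\hat\sigma P$ the Boolean algebra generated by $P$. For $\mathfrak F=(X,R_i,R_m,P)$: $xR_m^*z$ iff $\exists y(xR_iy\wedge yR_mz)$; $x\sim y$ iff $xR_iy\wedge yR_ix$; $[x]$ its class, $[X]$ the set of classes; $[x][R_i][y]$ iff $xR_iy$; $[x][R_m^*][y]$ iff $xR_m^*y'$ for some $y'\sim y$; $\hat\rho P:=\{\{[x]\mid x\in[i]b\}\mid b\in P\}$; $\hat\rho\mathfrak F:=([X],[R_i],[R_m^*],\hat\rho P)$. *)

theory Defs
  imports Main
begin

definition fip :: "'a set \<Rightarrow> 'a set set \<Rightarrow> bool" where
  "fip X F \<longleftrightarrow> (\<forall>G. G \<subseteq> F \<and> finite G \<longrightarrow> X \<inter> \<Inter>G \<noteq> {})"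

definition upset :: "'a set \<Rightarrow> ('a \<Rightarrow> 'a \<Rightarrow> bool) \<Rightarrow> 'a set \<Rightarrow> bool" where
  "upset X le a \<longleftrightarrow> a \<subseteq> X \<and> (\<forall>x y. x \<in> a \<and> le x y \<longrightarrow> y \<in> a)"

definition imp_le :: "'a set \<Rightarrow> ('a \<Rightarrow> 'a \<Rightarrow> bool) \<Rightarrow> 'a set \<Rightarrow> 'a set \<Rightarrow> 'a set" where
  "imp_le X le a b = {x \<in> X. \<forall>y. le x y \<and> y \<in> a \<longrightarrow> y \<in> b}"

definition imp_sq :: "'a set \<Rightarrow> ('a \<Rightarrow> 'a \<Rightarrow> bool) \<Rightarrow> 'a set \<Rightarrow> 'a set \<Rightarrow> 'a set" where
  "imp_sq X sq a b = {x \<in> X. \<forall>y. sq x y \<and> y \<in> a \<longrightarrow> y \<in> b}"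

definition general_mframe ::
  "'a set \<Rightarrow> ('a \<Rightarrow> 'a \<Rightarrow> bool) \<Rightarrow> ('a \<Rightarrow> 'a \<Rightarrow> bool) \<Rightarrow> 'a set set \<Rightarrow> bool" where
  "general_mframe X le sq P \<longleftrightarrow>
     (\<forall>x y. le x y \<longrightarrow> x \<in> X \<and> y \<in> X) \<and>
     (\<forall>x y. sq x y \<longrightarrow> x \<in> X \<and> y \<in> X) \<and>
     (\<forall>x\<in>X. le x x) \<and>
     (\<forall>x y z. le x y \<and> le y z \<longrightarrow> le x z) \<and>
     (\<forall>x y. le x y \<and> le y x \<longrightarrow> x = y) \<and>
     (\<forall>x y z. le x y \<and> sq y z \<longrightarrow> sq x z) \<and>
     (\<forall>a\<in>P. upset X le a) \<and> X \<in> P \<and> {} \<in> P \<and>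
     (\<forall>a\<in>P. \<forall>b\<in>P. a \<inter> b \<in> P \<and> a \<union> b \<in> P \<and>
                      imp_le X le a b \<in> P \<and> imp_sq X sq a b \<in> P)"

definition descriptive_mframe ::
  "'a set \<Rightarrow> ('a \<Rightarrow> 'a \<Rightarrow> bool) \<Rightarrow> ('a \<Rightarrow> 'a \<Rightarrow> bool) \<Rightarrow> 'a set set \<Rightarrow> bool" where
  "descriptive_mframe X le sq P \<longleftrightarrow>
     general_mframe X le sq P \<and>
     (\<forall>F. F \<subseteq> P \<union> {X - a | a. a \<in> P} \<and> fip X F \<longrightarrow> X \<inter> \<Inter>F \<noteq> {}) \<and>
     (\<forall>x\<in>X. \<forall>y\<in>X. \<not> le x y \<longrightarrow> (\<exists>a\<in>P. x \<in> a \<and> y \<notin> a)) \<and>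
     (\<forall>x\<in>X. \<forall>y\<in>X. \<not> sq x y \<longrightarrow>
        (\<exists>a\<in>P. \<exists>b\<in>P. x \<in> imp_sq X sq a b \<and> y \<in> a \<and> y \<notin> b))"

definition box :: "'a set \<Rightarrow> ('a \<Rightarrow> 'a \<Rightarrow> bool) \<Rightarrow> 'a set \<Rightarrow> 'a set" where
  "box X R a = {x \<in> X. \<forall>y. R x y \<longrightarrow> y \<in> a}"

definition general_S4K ::
  "'a set \<Rightarrow> ('a \<Rightarrow> 'a \<Rightarrow> bool) \<Rightarrow> ('a \<Rightarrow> 'a \<Rightarrow> bool) \<Rightarrow> 'a set set \<Rightarrow> bool" where
  "general_S4K X Ri Rm P \<longleftrightarrow>
     (\<forall>x y. Ri x y \<longrightarrow> x \<in> X \<and> y \<in> X) \<and>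
     (\<forall>x y. Rm x y \<longrightarrow> x \<in> X \<and> y \<in> X) \<and>
     (\<forall>x\<in>X. Ri x x) \<and>
     (\<forall>x y z. Ri x y \<and> Ri y z \<longrightarrow> Ri x z) \<and>
     P \<subseteq> Pow X \<and> {} \<in> P \<and> X \<in> P \<and>
     (\<forall>a\<in>P. X - a \<in> P \<and> box X Ri a \<in> P \<and> box X Rm a \<in> P) \<and>
     (\<forall>a\<in>P. \<forall>b\<in>P. a \<inter> b \<in> P \<and> a \<union> b \<in> P)"

definition descriptive_S4K ::
  "'a set \<Rightarrow> ('a \<Rightarrow> 'a \<Rightarrow> bool) \<Rightarrow> ('a \<Rightarrow> 'a \<Rightarrow> bool) \<Rightarrow> 'a set set \<Rightarrow> bool" where
  "descriptive_S4K X Ri Rm P \<longleftrightarrow>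
     general_S4K X Ri Rm P \<and>
     (\<forall>x\<in>X. \<forall>y\<in>X. x \<noteq> y \<longrightarrow> (\<exists>a\<in>P. x \<in> a \<and> y \<notin> a)) \<and>
     (\<forall>x\<in>X. \<forall>y\<in>X. Ri x y \<longleftrightarrow> (\<forall>a\<in>P. x \<in> box X Ri a \<longrightarrow> y \<in> a)) \<and>
     (\<forall>x\<in>X. \<forall>y\<in>X. Rm x y \<longleftrightarrow> (\<forall>a\<in>P. x \<in> box X Rm a \<longrightarrow> y \<in> a)) \<and>
     (\<forall>F. F \<subseteq> P \<and> fip X F \<longrightarrow> X \<inter> \<Inter>F \<noteq> {})"

inductive_set sigma_hat :: "'a set \<Rightarrow> 'a set set \<Rightarrow> 'a set set"
  for X :: "'a set" and P :: "'a set set" where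
  gen: "a \<in> P \<Longrightarrow> a \<in> sigma_hat X P"
| top: "X \<in> sigma_hat X P"
| compl: "a \<in> sigma_hat X P \<Longrightarrow> X - a \<in> sigma_hat X P"
| inter: "a \<in> sigma_hat X P \<Longrightarrow> b \<in> sigma_hat X P \<Longrightarrow> a \<inter> b \<in> sigma_hat X P"
| union: "a \<in> sigma_hat X P \<Longrightarrow> b \<in> sigma_hat X P \<Longrightarrow> a \<union> b \<in> sigma_hat X P"

definition Rm_star :: "('a \<Rightarrow> 'a \<Rightarrow> bool) \<Rightarrow> ('a \<Rightarrow> 'a \<Rightarrow> bool) \<Rightarrow> 'a \<Rightarrow> 'a \<Rightarrow> bool" where
  "Rm_star Ri Rm x z \<longleftrightarrow> (\<exists>y. Ri x y \<and> Rm y z)"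

definition equiv_cls :: "'a set \<Rightarrow> ('a \<Rightarrow> 'a \<Rightarrow> bool) \<Rightarrow> 'a \<Rightarrow> 'a set" where
  "equiv_cls X Ri x = {y \<in> X. Ri x y \<and> Ri y x}"

definition classes :: "'a set \<Rightarrow> ('a \<Rightarrow> 'a \<Rightarrow> bool) \<Rightarrow> 'a set set" where
  "classes X Ri = equiv_cls X Ri ` X"

definition rho_Ri :: "'a set \<Rightarrow> ('a \<Rightarrow> 'a \<Rightarrow> bool) \<Rightarrow> 'a set \<Rightarrow> 'a set \<Rightarrow> bool" where
  "rho_Ri X Ri c d \<longleftrightarrow> (\<exists>x\<in>X. \<exists>y\<in>X. c = equiv_cls X Ri x \<and> d = equiv_cls X Ri y \<and> Ri x y)"

definition rho_Rm :: "'a set \<Rightarrow> ('a \<Rightarrow> 'a \<Rightarrow> bool) \<Rightarrow> ('a \<Rightarrow> 'a \<Rightarrow> bool) \<Rightarrow> 'a set \<Rightarrow> 'a set \<Rightarrow> bool" where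
  "rho_Rm X Ri Rm c d \<longleftrightarrow> (\<exists>x\<in>X. \<exists>y\<in>X. c = equiv_cls X Ri x \<and> d = equiv_cls X Ri y \<and>
      (\<exists>y'\<in>X. Ri y' y \<and> Ri y y' \<and> Rm_star Ri Rm x y'))"

definition rho_P :: "'a set \<Rightarrow> ('a \<Rightarrow> 'a \<Rightarrow> bool) \<Rightarrow> 'a set set \<Rightarrow> 'a set set set" where
  "rho_P X Ri P = {equiv_cls X Ri ` box X Ri b | b. b \<in> P}"

end

theory Submission
  imports Defs
begin


lemma sigma_sub: "a \<in> sigma_hat X P \<Longrightarrow> P \<subseteq> Pow X \<Longrightarrow> a \<subseteq> X"
  by (induction rule: sigma_hat.induct) auto

lemma fip_mono: "fip X F \<Longrightarrow> G \<subseteq> F \<Longrightarrow> fip X G"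
  unfolding fip_def by blast

definition cnf :: "'a set \<Rightarrow> ('a set \<times> 'a set) set \<Rightarrow> 'a set" where
  "cnf X F = X \<inter> (\<Inter>p\<in>F. (X - fst p) \<union> snd p)"

definition isCNF :: "'a set \<Rightarrow> 'a set set \<Rightarrow> 'a set \<Rightarrow> bool" where
  "isCNF X P a \<longleftrightarrow> (\<exists>F. finite F \<and> F \<subseteq> P \<times> P \<and> a = cnf X F)"

lemma fin_inter_sigma:
  "finite F \<Longrightarrow> (\<forall>p\<in>F. f p \<in> sigma_hat X P) \<Longrightarrow> X \<inter> (\<Inter>p\<in>F. f p) \<in> sigma_hat X P"
proof (induction F rule: finite_induct)
  case empty then show ?case by (simp add: sigma_hat.top)
next
  case (insert p F)
  have "X \<inter> (\<Inter>q\<in>insert p F. f q) = f p \<inter> (X \<inter> (\<Inter>q\<in>F. f q))" by auto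
  then show ?case using insert by (simp add: sigma_hat.inter)
qed

lemma box_cnf:
  assumes "\<forall>x y. R x y \<longrightarrow> y \<in> X"
  shows "box X R (cnf X F) = X \<inter> (\<Inter>p\<in>F. {x\<in>X. \<forall>y. R x y \<and> y \<in> fst p \<longrightarrow> y \<in> snd p})"
  using assms by (auto simp: box_def cnf_def)

locale dl =
  fixes X :: "'a set" and P :: "'a set set"
  assumes sub: "P \<subseteq> Pow X" and top: "X \<in> P" and bot: "{} \<in> P"
    and int: "a \<in> P \<Longrightarrow> b \<in> P \<Longrightarrow> a \<inter> b \<in> P"
    and un: "a \<in> P \<Longrightarrow> b \<in> P \<Longrightarrow> a \<union> b \<in> P"
begin

lemma cnf_P: "a \<in> P \<Longrightarrow> isCNF X P a"
  unfolding isCNF_def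
  apply (rule exI[of _ "{(X,a)}"])
  using sub top by (auto simp: cnf_def)

lemma cnf_top: "isCNF X P X"
  unfolding isCNF_def by (rule exI[of _ "{}"]) (auto simp: cnf_def)

lemma cnf_int: "isCNF X P a \<Longrightarrow> isCNF X P b \<Longrightarrow> isCNF X P (a \<inter> b)"
  unfolding isCNF_def
proof (elim exE conjE)
  fix F G assume "finite F" "F \<subseteq> P \<times> P" "a = cnf X F" "finite G" "G \<subseteq> P \<times> P" "b = cnf X G"
  then show "\<exists>H. finite H \<and> H \<subseteq> P \<times> P \<and> a \<inter> b = cnf X H"
    by (intro exI[of _ "F \<union> G"]) (auto simp: cnf_def)
qed

lemma cnf_un_eq:
  "cnf X F \<union> cnf X G = cnf X ((\<lambda>(p,q). (fst p \<inter> fst q, snd p \<union> snd q)) ` (F \<times> G))"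
proof
  show "cnf X F \<union> cnf X G \<subseteq> cnf X ((\<lambda>(p,q). (fst p \<inter> fst q, snd p \<union> snd q)) ` (F \<times> G))"
    unfolding cnf_def by force
next
  show "cnf X ((\<lambda>(p,q). (fst p \<inter> fst q, snd p \<union> snd q)) ` (F \<times> G)) \<subseteq> cnf X F \<union> cnf X G"
  proof
    fix x assume x: "x \<in> cnf X ((\<lambda>(p,q). (fst p \<inter> fst q, snd p \<union> snd q)) ` (F \<times> G))"
    show "x \<in> cnf X F \<union> cnf X G"
    proof (rule ccontr)
      assume "x \<notin> cnf X F \<union> cnf X G"
      moreover have xX: "x \<in> X" using x by (auto simp: cnf_def)
      ultimately obtain p q where "p \<in> F" "x \<notin> (X - fst p) \<union> snd p" "q \<in> G" "x \<notin> (X - fst q) \<union> snd q"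
        by (auto simp: cnf_def)
      moreover have "x \<in> (X - (fst p \<inter> fst q)) \<union> (snd p \<union> snd q)"
        using x \<open>p \<in> F\<close> \<open>q \<in> G\<close> by (auto simp: cnf_def)
      ultimately show False by blast
    qed
  qed
qed

lemma cnf_un: "isCNF X P a \<Longrightarrow> isCNF X P b \<Longrightarrow> isCNF X P (a \<union> b)"
  unfolding isCNF_def
proof (elim exE conjE)
  fix F G assume "finite F" "F \<subseteq> P \<times> P" "a = cnf X F" "finite G" "G \<subseteq> P \<times> P" "b = cnf X G"
  then show "\<exists>H. finite H \<and> H \<subseteq> P \<times> P \<and> a \<union> b = cnf X H"
    using int un
    by (intro exI[of _ "(\<lambda>(p,q). (fst p \<inter> fst q, snd p \<union> snd q)) ` (F \<times> G)"])
       (auto simp: cnf_un_eq mem_Times_iff subset_iff)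
qed

lemma cnf_compl_aux: "finite F \<Longrightarrow> F \<subseteq> P \<times> P \<Longrightarrow> isCNF X P (X - cnf X F)"
proof (induction F rule: finite_induct)
  case empty
  have "X - cnf X {} = cnf X {(X, {})}" by (auto simp: cnf_def)
  then show ?case unfolding isCNF_def using top bot by blast
next
  case (insert p F)
  have e: "X - cnf X (insert p F) = cnf X {(X, fst p), (snd p, {})} \<union> (X - cnf X F)"
    using insert.prems sub by (auto simp: cnf_def)
  have "isCNF X P (cnf X {(X, fst p), (snd p, {})})"
    unfolding isCNF_def using insert.prems top bot
    by (intro exI[of _ "{(X, fst p), (snd p, {})}"]) (auto simp: mem_Times_iff)
  moreover have "isCNF X P (X - cnf X F)" using insert.IH insert.prems by simp
  ultimately show ?case unfolding e by (rule cnf_un)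
qed

lemma cnf_compl: "isCNF X P a \<Longrightarrow> isCNF X P (X - a)"
  using cnf_compl_aux unfolding isCNF_def[of X P a] by blast

lemma sigma_cnf: "a \<in> sigma_hat X P \<Longrightarrow> isCNF X P a"
  by (induction rule: sigma_hat.induct) (auto intro: cnf_P cnf_top cnf_compl cnf_int cnf_un)

lemma box_sigma:
  assumes R: "\<forall>x y. R x y \<longrightarrow> y \<in> X"
    and imp: "\<And>u v. u \<in> P \<Longrightarrow> v \<in> P \<Longrightarrow> {x\<in>X. \<forall>y. R x y \<and> y \<in> u \<longrightarrow> y \<in> v} \<in> P"
    and a: "a \<in> sigma_hat X P"
  shows "box X R a \<in> sigma_hat X P"
proof -
  obtain F where F: "finite F" "F \<subseteq> P \<times> P" "a = cnf X F"
    using sigma_cnf[OF a] unfolding isCNF_def by blast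
  have "\<forall>p\<in>F. {x\<in>X. \<forall>y. R x y \<and> y \<in> fst p \<longrightarrow> y \<in> snd p} \<in> sigma_hat X P"
  proof
    fix p assume "p \<in> F"
    then have "fst p \<in> P" "snd p \<in> P" using F(2) by (auto simp: mem_Times_iff)
    then show "{x\<in>X. \<forall>y. R x y \<and> y \<in> fst p \<longrightarrow> y \<in> snd p} \<in> sigma_hat X P"
      using imp sigma_hat.gen by blast
  qed
  then have "X \<inter> (\<Inter>p\<in>F. {x\<in>X. \<forall>y. R x y \<and> y \<in> fst p \<longrightarrow> y \<in> snd p}) \<in> sigma_hat X P"
    using F(1) by (rule fin_inter_sigma[rotated])
  then show ?thesis using box_cnf[OF R] F by simp
qed

end


lemma maximal_fip:
  assumes "F \<subseteq> B" "fip X F"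
  obtains M where "F \<subseteq> M" "M \<subseteq> B" "fip X M"
    "\<And>N. F \<subseteq> N \<Longrightarrow> N \<subseteq> B \<Longrightarrow> fip X N \<Longrightarrow> M \<subseteq> N \<Longrightarrow> N = M"
proof -
  define A where "A = {M. F \<subseteq> M \<and> M \<subseteq> B \<and> fip X M}"
  have "\<forall>C\<in>chains A. \<exists>U\<in>A. \<forall>Z\<in>C. Z \<subseteq> U"
  proof
    fix C assume C: "C \<in> chains A"
    show "\<exists>U\<in>A. \<forall>Z\<in>C. Z \<subseteq> U"
    proof (cases "C = {}")
      case True
      have "F \<in> A" unfolding A_def using assms by blast
      then show ?thesis using True by blast
    next
      case False
      have sub: "C \<subseteq> A" using C unfolding chains_def by blast
      have ch: "subset.chain UNIV C" using C unfolding chains_def chain_subset_alt_def by blast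
      have "fip X (\<Union>C)" unfolding fip_def
      proof (intro allI impI)
        fix G assume G: "G \<subseteq> \<Union>C \<and> finite G"
        obtain Z where Z: "Z \<in> C" "G \<subseteq> Z"
          using finite_subset_Union_chain[of G C UNIV] False ch G by blast
        then have "fip X Z" using sub unfolding A_def by blast
        then show "X \<inter> \<Inter>G \<noteq> {}" using Z G unfolding fip_def by blast
      qed
      moreover have "F \<subseteq> \<Union>C"
      proof -
        obtain Z where "Z \<in> C" using False by blast
        then show ?thesis using sub unfolding A_def by blast
      qed
      moreover have "\<Union>C \<subseteq> B" using sub unfolding A_def by blast
      ultimately have "\<Union>C \<in> A" unfolding A_def by blast
      then show ?thesis by blast
    qed
  qed
  from Zorn_Lemma2[OF this] obtain M where M: "M \<in> A" "\<forall>N\<in>A. M \<subseteq> N \<longrightarrow> N = M" by blast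
  show ?thesis
  proof (rule that)
    show "F \<subseteq> M" "M \<subseteq> B" "fip X M" using M(1) unfolding A_def by blast+
    fix N assume "F \<subseteq> N" "N \<subseteq> B" "fip X N" "M \<subseteq> N"
    then show "N = M" using M(2) unfolding A_def by blast
  qed
qed

lemma sigma_compact:
  assumes sub: "P \<subseteq> Pow X"
    and comp: "\<forall>F. F \<subseteq> P \<union> {X - a | a. a \<in> P} \<and> fip X F \<longrightarrow> X \<inter> \<Inter>F \<noteq> {}"
    and F: "F \<subseteq> sigma_hat X P" "fip X F"
  shows "X \<inter> \<Inter>F \<noteq> {}"
proof -
  let ?B = "sigma_hat X P"
  obtain M where M: "F \<subseteq> M" "M \<subseteq> ?B" "fip X M"
    and mx: "\<And>N. F \<subseteq> N \<Longrightarrow> N \<subseteq> ?B \<Longrightarrow> fip X N \<Longrightarrow> M \<subseteq> N \<Longrightarrow> N = M"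
    using maximal_fip[OF F] by blast
  have finM: "X \<inter> \<Inter>G \<noteq> {}" if "finite G" "G \<subseteq> M" for G
    using M(3) that unfolding fip_def by blast
  have P1: "a \<in> M \<or> X - a \<in> M" if a: "a \<in> ?B" for a
  proof (rule ccontr)
    assume n: "\<not> (a \<in> M \<or> X - a \<in> M)"
    have "\<not> fip X (insert a M)"
    proof
      assume "fip X (insert a M)"
      then have "insert a M = M" using mx[of "insert a M"] M a by blast
      then show False using n by blast
    qed
    then obtain G1 where G1: "G1 \<subseteq> insert a M" "finite G1" "X \<inter> \<Inter>G1 = {}"
      unfolding fip_def by blast
    have "\<not> fip X (insert (X - a) M)"
    proof
      assume "fip X (insert (X - a) M)"
      moreover have "X - a \<in> ?B" using a by (rule sigma_hat.compl)
      ultimately have "insert (X - a) M = M" using mx[of "insert (X - a) M"] M by blast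
      then show False using n by blast
    qed
    then obtain G2 where G2: "G2 \<subseteq> insert (X - a) M" "finite G2" "X \<inter> \<Inter>G2 = {}"
      unfolding fip_def by blast
    have "X \<inter> \<Inter>((G1 - {a}) \<union> (G2 - {X - a})) \<noteq> {}"
      using G1 G2 by (intro finM) auto
    then obtain x where x: "x \<in> X" "x \<in> \<Inter>((G1 - {a}) \<union> (G2 - {X - a}))" by blast
    show False
    proof (cases "x \<in> a")
      case True
      then have "x \<in> X \<inter> \<Inter>G1" using x by blast
      then show False using G1 by blast
    next
      case False
      then have "x \<in> X \<inter> \<Inter>G2" using x by blast
      then show False using G2 by blast
    qed
  qed
  have P2: "\<not> (a \<in> M \<and> X - a \<in> M)" for a
    using finM[of "{a, X - a}"] by auto
  let ?S = "M \<inter> (P \<union> {X - a | a. a \<in> P})"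
  have "fip X ?S" using fip_mono[OF M(3)] by blast
  moreover have "?S \<subseteq> P \<union> {X - a | a. a \<in> P}" by blast
  ultimately have "X \<inter> \<Inter>?S \<noteq> {}" using comp by blast
  then obtain x where x: "x \<in> X" "x \<in> \<Inter>?S" by blast
  have key: "a \<in> M \<longleftrightarrow> x \<in> a" if "a \<in> ?B" for a
    using that
  proof (induction rule: sigma_hat.induct)
    case (gen a)
    show ?case
    proof
      assume "a \<in> M" then have "a \<in> ?S" using gen by blast
      then show "x \<in> a" using x(2) by blast
    next
      assume xa: "x \<in> a"
      show "a \<in> M"
      proof (rule ccontr)
        assume "a \<notin> M"
        then have "X - a \<in> M" using P1[OF sigma_hat.gen[OF gen]] by blast
        then have "X - a \<in> ?S" using gen by blast
        then have "x \<in> X - a" using x(2) by blast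
        then show False using xa by blast
      qed
    qed
  next
    case top
    have "X - X \<notin> M" using finM[of "{X - X}"] by auto
    then show ?case using P1[OF sigma_hat.top] x by blast
  next
    case (compl a)
    have "X - a \<in> M \<longleftrightarrow> a \<notin> M" using P1[OF compl.hyps(1)] P2[of a] by blast
    then show ?case using compl.IH x(1) by blast
  next
    case (inter a b)
    have "a \<inter> b \<in> M \<longleftrightarrow> a \<in> M \<and> b \<in> M"
    proof
      assume ab: "a \<inter> b \<in> M"
      show "a \<in> M \<and> b \<in> M"
      proof (rule ccontr)
        assume "\<not> (a \<in> M \<and> b \<in> M)"
        then have "X - a \<in> M \<or> X - b \<in> M" using P1[OF inter.hyps(1)] P1[OF inter.hyps(2)] by blast
        then show False using ab finM[of "{a \<inter> b, X - a}"] finM[of "{a \<inter> b, X - b}"] by auto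
      qed
    next
      assume ab: "a \<in> M \<and> b \<in> M"
      show "a \<inter> b \<in> M"
      proof (rule ccontr)
        assume "a \<inter> b \<notin> M"
        then have "X - (a \<inter> b) \<in> M" using P1[OF sigma_hat.inter[OF inter.hyps(1,2)]] by blast
        then show False using ab finM[of "{a, b, X - (a \<inter> b)}"] by auto
      qed
    qed
    then show ?case using inter.IH by blast
  next
    case (union a b)
    have "a \<union> b \<in> M \<longleftrightarrow> a \<in> M \<or> b \<in> M"
    proof
      assume ab: "a \<union> b \<in> M"
      show "a \<in> M \<or> b \<in> M"
      proof (rule ccontr)
        assume "\<not> (a \<in> M \<or> b \<in> M)"
        then have "X - a \<in> M \<and> X - b \<in> M" using P1[OF union.hyps(1)] P1[OF union.hyps(2)] by blast
        then show False using ab finM[of "{a \<union> b, X - a, X - b}"] by auto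
      qed
    next
      assume ab: "a \<in> M \<or> b \<in> M"
      show "a \<union> b \<in> M"
      proof (rule ccontr)
        assume "a \<union> b \<notin> M"
        then have "X - (a \<union> b) \<in> M" using P1[OF sigma_hat.union[OF union.hyps(1,2)]] by blast
        then show False using ab finM[of "{a, X - (a \<union> b)}"] finM[of "{b, X - (a \<union> b)}"] by auto
      qed
    qed
    then show ?case using union.IH by blast
  qed
  have "\<forall>a\<in>F. x \<in> a" using key M(1) F(1) by blast
  then have "x \<in> X \<inter> \<Inter>F" using x(1) by blast
  then show ?thesis by blast
qed


lemma part1:
  assumes D: "descriptive_mframe X le sq P"
  shows "descriptive_S4K X le sq (sigma_hat X P)"
proof -
  have G: "general_mframe X le sq P" using D unfolding descriptive_mframe_def by (elim conjE)
  note GG = G[unfolded general_mframe_def]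
  have leX: "\<And>x y. le x y \<Longrightarrow> x \<in> X \<and> y \<in> X" using GG by (elim conjE) blast
  have sqX: "\<And>x y. sq x y \<Longrightarrow> x \<in> X \<and> y \<in> X" using GG by (elim conjE) blast
  have refl: "\<And>x. x \<in> X \<Longrightarrow> le x x" using GG by (elim conjE) blast
  have trans: "\<And>x y z. le x y \<Longrightarrow> le y z \<Longrightarrow> le x z" using GG by (elim conjE) blast
  have antis: "\<And>x y. le x y \<Longrightarrow> le y x \<Longrightarrow> x = y" using GG by (elim conjE) blast
  have ups: "\<And>a. a \<in> P \<Longrightarrow> upset X le a" using GG by (elim conjE) blast
  have XP: "X \<in> P" using GG by (elim conjE) blast
  have eP: "{} \<in> P" using GG by (elim conjE) blast
  have cl: "\<And>a b. a \<in> P \<Longrightarrow> b \<in> P \<Longrightarrow> a \<inter> b \<in> P \<and> a \<union> b \<in> P \<and> imp_le X le a b \<in> P \<and> imp_sq X sq a b \<in> P"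
    using GG by (elim conjE) blast
  have subP: "P \<subseteq> Pow X" using ups unfolding upset_def by blast
  interpret dl X P
  proof
    show "P \<subseteq> Pow X" "X \<in> P" "{} \<in> P" by (fact subP XP eP)+
  qed (use cl in blast)+
  note DD = D[unfolded descriptive_mframe_def]
  have comp: "\<forall>F. F \<subseteq> P \<union> {X - a | a. a \<in> P} \<and> fip X F \<longrightarrow> X \<inter> \<Inter>F \<noteq> {}"
    using DD by (elim conjE)
  have ref1: "\<forall>x\<in>X. \<forall>y\<in>X. \<not> le x y \<longrightarrow> (\<exists>a\<in>P. x \<in> a \<and> y \<notin> a)"
    using DD by (elim conjE)
  have ref2: "\<forall>x\<in>X. \<forall>y\<in>X. \<not> sq x y \<longrightarrow> (\<exists>a\<in>P. \<exists>b\<in>P. x \<in> imp_sq X sq a b \<and> y \<in> a \<and> y \<notin> b)"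
    using DD by (elim conjE)
  let ?B = "sigma_hat X P"
  have boxle: "box X le a \<in> ?B" if "a \<in> ?B" for a
    using that by (intro box_sigma) (use leX cl in \<open>auto simp: imp_le_def\<close>)
  have boxsq: "box X sq a \<in> ?B" if "a \<in> ?B" for a
    using that by (intro box_sigma) (use sqX cl in \<open>auto simp: imp_sq_def\<close>)
  have gen: "general_S4K X le sq ?B"
    unfolding general_S4K_def
  proof (intro conjI)
    show "\<forall>x y. le x y \<longrightarrow> x \<in> X \<and> y \<in> X" using leX by blast
    show "\<forall>x y. sq x y \<longrightarrow> x \<in> X \<and> y \<in> X" using sqX by blast
    show "\<forall>x\<in>X. le x x" using refl by blast
    show "\<forall>x y z. le x y \<and> le y z \<longrightarrow> le x z" using trans by blast
    show "?B \<subseteq> Pow X" using sigma_sub[OF _ subP] by blast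
    show "{} \<in> ?B" using eP by (rule sigma_hat.gen)
    show "X \<in> ?B" by (rule sigma_hat.top)
    show "\<forall>a\<in>?B. X - a \<in> ?B \<and> box X le a \<in> ?B \<and> box X sq a \<in> ?B"
      using sigma_hat.compl boxle boxsq by blast
    show "\<forall>a\<in>?B. \<forall>b\<in>?B. a \<inter> b \<in> ?B \<and> a \<union> b \<in> ?B"
      using sigma_hat.inter sigma_hat.union by blast
  qed
  have upbox: "x \<in> box X le a" if "a \<in> P" "x \<in> a" for a x
    using ups[OF that(1)] that(2) unfolding upset_def box_def by blast
  have diff: "\<forall>x\<in>X. \<forall>y\<in>X. x \<noteq> y \<longrightarrow> (\<exists>a\<in>?B. x \<in> a \<and> y \<notin> a)"
  proof (intro ballI impI)
    fix x y assume xy: "x \<in> X" "y \<in> X" "x \<noteq> y"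
    then have "\<not> le x y \<or> \<not> le y x" using antis by blast
    then show "\<exists>a\<in>?B. x \<in> a \<and> y \<notin> a"
    proof
      assume "\<not> le x y"
      then obtain a where "a \<in> P" "x \<in> a" "y \<notin> a" using ref1 xy by blast
      then show ?thesis using sigma_hat.gen by blast
    next
      assume "\<not> le y x"
      then obtain a where "a \<in> P" "y \<in> a" "x \<notin> a" using ref1 xy by blast
      then show ?thesis using sigma_hat.gen[THEN sigma_hat.compl] xy by blast
    qed
  qed
  have tle: "\<forall>x\<in>X. \<forall>y\<in>X. le x y \<longleftrightarrow> (\<forall>a\<in>?B. x \<in> box X le a \<longrightarrow> y \<in> a)"
  proof (intro ballI, rule iffI)
    fix x y assume "le x y" then show "\<forall>a\<in>?B. x \<in> box X le a \<longrightarrow> y \<in> a"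
      unfolding box_def by blast
  next
    fix x y assume xy: "x \<in> X" "y \<in> X" and h: "\<forall>a\<in>?B. x \<in> box X le a \<longrightarrow> y \<in> a"
    show "le x y"
    proof (rule ccontr)
      assume "\<not> le x y"
      then obtain a where "a \<in> P" "x \<in> a" "y \<notin> a" using ref1 xy by blast
      then show False using h upbox sigma_hat.gen by blast
    qed
  qed
  have tsq: "\<forall>x\<in>X. \<forall>y\<in>X. sq x y \<longleftrightarrow> (\<forall>a\<in>?B. x \<in> box X sq a \<longrightarrow> y \<in> a)"
  proof (intro ballI, rule iffI)
    fix x y assume "sq x y" then show "\<forall>a\<in>?B. x \<in> box X sq a \<longrightarrow> y \<in> a"
      unfolding box_def by blast
  next
    fix x y assume xy: "x \<in> X" "y \<in> X" and h: "\<forall>a\<in>?B. x \<in> box X sq a \<longrightarrow> y \<in> a"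
    show "sq x y"
    proof (rule ccontr)
      assume "\<not> sq x y"
      then obtain a b where ab: "a \<in> P" "b \<in> P" "x \<in> imp_sq X sq a b" "y \<in> a" "y \<notin> b"
        using ref2 xy by blast
      have "(X - a) \<union> b \<in> ?B" using ab by (intro sigma_hat.union sigma_hat.compl sigma_hat.gen)
      moreover have "x \<in> box X sq ((X - a) \<union> b)"
        using ab(3) sqX unfolding imp_sq_def box_def by blast
      ultimately show False using h ab by blast
    qed
  qed
  have cpt: "\<forall>F. F \<subseteq> ?B \<and> fip X F \<longrightarrow> X \<inter> \<Inter>F \<noteq> {}"
    using sigma_compact[OF subP comp] by blast
  show ?thesis unfolding descriptive_S4K_def using gen diff tle tsq cpt by blast
qed



locale S4q =
  fixes Y :: "'b set" and Ri Rm :: "'b \<Rightarrow> 'b \<Rightarrow> bool" and Q :: "'b set set"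
  assumes G: "general_S4K Y Ri Rm Q"
begin

abbreviation cls where "cls \<equiv> equiv_cls Y Ri"

lemma Ri_in: "Ri x y \<Longrightarrow> x \<in> Y \<and> y \<in> Y" using G unfolding general_S4K_def by (elim conjE) blast
lemma Rm_in: "Rm x y \<Longrightarrow> x \<in> Y \<and> y \<in> Y" using G unfolding general_S4K_def by (elim conjE) blast
lemma Ri_refl: "x \<in> Y \<Longrightarrow> Ri x x" using G unfolding general_S4K_def by (elim conjE) blast
lemma Ri_trans: "Ri x y \<Longrightarrow> Ri y z \<Longrightarrow> Ri x z" using G unfolding general_S4K_def by (elim conjE) blast
lemma Q_sub: "a \<in> Q \<Longrightarrow> a \<subseteq> Y" using G unfolding general_S4K_def by (elim conjE) blast
lemma Q_empty: "{} \<in> Q" using G unfolding general_S4K_def by (elim conjE) blast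
lemma Q_top: "Y \<in> Q" using G unfolding general_S4K_def by (elim conjE) blast
lemma Q_compl: "a \<in> Q \<Longrightarrow> Y - a \<in> Q" using G unfolding general_S4K_def by (elim conjE) blast
lemma Q_boxi: "a \<in> Q \<Longrightarrow> box Y Ri a \<in> Q" using G unfolding general_S4K_def by (elim conjE) blast
lemma Q_boxm: "a \<in> Q \<Longrightarrow> box Y Rm a \<in> Q" using G unfolding general_S4K_def by (elim conjE) blast
lemma Q_int: "a \<in> Q \<Longrightarrow> b \<in> Q \<Longrightarrow> a \<inter> b \<in> Q" using G unfolding general_S4K_def by (elim conjE) blast
lemma Q_un: "a \<in> Q \<Longrightarrow> b \<in> Q \<Longrightarrow> a \<union> b \<in> Q" using G unfolding general_S4K_def by (elim conjE) blast

definition up :: "'b set \<Rightarrow> bool" where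
  "up U \<longleftrightarrow> U \<subseteq> Y \<and> (\<forall>u v. u \<in> U \<and> Ri u v \<longrightarrow> v \<in> U)"

lemma cls_self: "x \<in> Y \<Longrightarrow> x \<in> cls x"
  unfolding equiv_cls_def using Ri_refl by blast

lemma cls_eq: "x \<in> Y \<Longrightarrow> y \<in> Y \<Longrightarrow> cls x = cls y \<longleftrightarrow> Ri x y \<and> Ri y x"
proof
  assume "x \<in> Y" "y \<in> Y" "cls x = cls y"
  then show "Ri x y \<and> Ri y x" using cls_self[of y] unfolding equiv_cls_def by blast
next
  assume "Ri x y \<and> Ri y x"
  then show "cls x = cls y" unfolding equiv_cls_def using Ri_trans by blast
qed

lemma cls_mem_up: "up U \<Longrightarrow> x \<in> Y \<Longrightarrow> cls x \<in> cls ` U \<longleftrightarrow> x \<in> U"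
proof
  assume U: "up U" and x: "x \<in> Y" and "cls x \<in> cls ` U"
  then obtain u where "u \<in> U" "cls x = cls u" by blast
  moreover have "u \<in> Y" using U \<open>u \<in> U\<close> unfolding up_def by blast
  ultimately show "x \<in> U" using U x cls_eq unfolding up_def by blast
qed blast

lemma box_up: "up (box Y Ri a)"
  unfolding up_def box_def using Ri_trans Ri_in by blast

lemma up_box: "up U \<Longrightarrow> box Y Ri U = U"
  unfolding up_def box_def using Ri_refl by blast

lemma rhoRi: "x \<in> Y \<Longrightarrow> y \<in> Y \<Longrightarrow> rho_Ri Y Ri (cls x) (cls y) \<longleftrightarrow> Ri x y"
proof
  assume xy: "x \<in> Y" "y \<in> Y" "rho_Ri Y Ri (cls x) (cls y)"
  then obtain x1 y1 where "x1 \<in> Y" "y1 \<in> Y" "cls x = cls x1" "cls y = cls y1" "Ri x1 y1"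
    unfolding rho_Ri_def by blast
  then show "Ri x y" using xy cls_eq Ri_trans by meson
next
  assume "x \<in> Y" "y \<in> Y" "Ri x y" then show "rho_Ri Y Ri (cls x) (cls y)"
    unfolding rho_Ri_def by blast
qed

lemma rhoRm: "x \<in> Y \<Longrightarrow> z \<in> Y \<Longrightarrow>
   rho_Rm Y Ri Rm (cls x) (cls z) \<longleftrightarrow> (\<exists>z'. Ri z' z \<and> Ri z z' \<and> Rm_star Ri Rm x z')"
proof
  assume xz: "x \<in> Y" "z \<in> Y" "rho_Rm Y Ri Rm (cls x) (cls z)"
  then obtain x1 y1 y' where "x1 \<in> Y" "y1 \<in> Y" "cls x = cls x1" "cls z = cls y1"
    "y' \<in> Y" "Ri y' y1" "Ri y1 y'" "Rm_star Ri Rm x1 y'"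
    unfolding rho_Rm_def by blast
  moreover have "Ri x x1" "Ri z y1" "Ri y1 z" using calculation xz cls_eq by blast+
  ultimately show "\<exists>z'. Ri z' z \<and> Ri z z' \<and> Rm_star Ri Rm x z'"
    unfolding Rm_star_def using Ri_trans by meson
next
  assume xz: "x \<in> Y" "z \<in> Y" "\<exists>z'. Ri z' z \<and> Ri z z' \<and> Rm_star Ri Rm x z'"
  then show "rho_Rm Y Ri Rm (cls x) (cls z)"
    unfolding rho_Rm_def using Ri_in by blast
qed

lemma classes_iff: "c \<in> classes Y Ri \<longleftrightarrow> (\<exists>x\<in>Y. c = cls x)"
  unfolding classes_def by blast

definition UQ :: "'b set set" where "UQ = {U \<in> Q. up U}"

lemma rhoP: "rho_P Y Ri Q = (\<lambda>U. cls ` U) ` UQ"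
proof
  show "rho_P Y Ri Q \<subseteq> (\<lambda>U. cls ` U) ` UQ"
    unfolding rho_P_def UQ_def using Q_boxi box_up by blast
  show "(\<lambda>U. cls ` U) ` UQ \<subseteq> rho_P Y Ri Q"
    unfolding rho_P_def UQ_def using up_box by fastforce
qed

lemma UQ_sub: "U \<in> UQ \<Longrightarrow> U \<subseteq> Y" unfolding UQ_def up_def by blast

lemma img_sub: "U \<subseteq> Y \<Longrightarrow> cls ` U \<subseteq> classes Y Ri"
  unfolding classes_def by blast

lemma img_int: "up U \<Longrightarrow> up V \<Longrightarrow> cls ` U \<inter> cls ` V = cls ` (U \<inter> V)"
proof
  assume U: "up U" and V: "up V"
  show "cls ` U \<inter> cls ` V \<subseteq> cls ` (U \<inter> V)"
  proof
    fix c assume "c \<in> cls ` U \<inter> cls ` V"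
    then obtain u where u: "u \<in> U" "c = cls u" "c \<in> cls ` V" by blast
    then have "u \<in> V" using cls_mem_up[OF V, of u] U unfolding up_def by blast
    then show "c \<in> cls ` (U \<inter> V)" using u by blast
  qed
qed blast

lemma up_int: "up U \<Longrightarrow> up V \<Longrightarrow> up (U \<inter> V)" unfolding up_def by blast
lemma up_un: "up U \<Longrightarrow> up V \<Longrightarrow> up (U \<union> V)" unfolding up_def by blast

lemma imp_le_eq:
  assumes U: "up U" and V: "up V"
  shows "imp_le (classes Y Ri) (rho_Ri Y Ri) (cls ` U) (cls ` V) = cls ` box Y Ri ((Y - U) \<union> V)"
proof (intro set_eqI iffI)
  fix c assume c: "c \<in> imp_le (classes Y Ri) (rho_Ri Y Ri) (cls ` U) (cls ` V)"
  then have cC: "c \<in> classes Y Ri" and cH: "\<forall>d. rho_Ri Y Ri c d \<and> d \<in> cls ` U \<longrightarrow> d \<in> cls ` V"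
    unfolding imp_le_def mem_Collect_eq by blast+
  from cC obtain x where x: "x \<in> Y" "c = cls x" unfolding classes_iff by (elim bexE) (rule that)
  have "x \<in> box Y Ri ((Y - U) \<union> V)" unfolding box_def mem_Collect_eq
  proof (intro conjI allI impI)
    show "x \<in> Y" by (fact x(1))
    fix y assume xy: "Ri x y"
    have yY: "y \<in> Y" using Ri_in[OF xy] by simp
    show "y \<in> (Y - U) \<union> V"
    proof (cases "y \<in> U")
      case True
      have "rho_Ri Y Ri c (cls y)" using rhoRi[OF x(1) yY] xy x(2) by simp
      moreover have "cls y \<in> cls ` U" using True by (rule imageI)
      ultimately have "cls y \<in> cls ` V" using cH by blast
      then have "y \<in> V" using cls_mem_up[OF V yY] by simp
      then show ?thesis by simp
    next
      case False then show ?thesis using yY by simp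
    qed
  qed
  then show "c \<in> cls ` box Y Ri ((Y - U) \<union> V)" unfolding x(2) by (rule imageI)
next
  fix c assume "c \<in> cls ` box Y Ri ((Y - U) \<union> V)"
  then obtain x where x: "x \<in> box Y Ri ((Y - U) \<union> V)" "c = cls x"
    unfolding image_iff by (elim bexE) (rule that)
  have xY: "x \<in> Y" and xH: "\<forall>y. Ri x y \<longrightarrow> y \<in> (Y - U) \<union> V"
    using x(1) unfolding box_def mem_Collect_eq by blast+
  show "c \<in> imp_le (classes Y Ri) (rho_Ri Y Ri) (cls ` U) (cls ` V)"
    unfolding imp_le_def mem_Collect_eq
  proof (intro conjI allI impI)
    show "c \<in> classes Y Ri" unfolding classes_iff using xY x(2) by (rule bexI[rotated])
    fix d assume d: "rho_Ri Y Ri c d \<and> d \<in> cls ` U"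
    then obtain y where y: "y \<in> U" "d = cls y" unfolding image_iff by (elim conjE bexE) (rule that)
    have yY: "y \<in> Y" using U y(1) unfolding up_def by blast
    have "Ri x y" using rhoRi[OF xY yY] d x(2) y(2) by simp
    then have "y \<in> V" using xH y(1) by blast
    then show "d \<in> cls ` V" unfolding y(2) by (rule imageI)
  qed
qed

lemma imp_sq_eq:
  assumes U: "up U" and V: "up V"
  shows "imp_sq (classes Y Ri) (rho_Rm Y Ri Rm) (cls ` U) (cls ` V) = cls ` box Y Ri (box Y Rm ((Y - U) \<union> V))"
proof (intro set_eqI iffI)
  fix c assume c: "c \<in> imp_sq (classes Y Ri) (rho_Rm Y Ri Rm) (cls ` U) (cls ` V)"
  then have cC: "c \<in> classes Y Ri" and cH: "\<forall>d. rho_Rm Y Ri Rm c d \<and> d \<in> cls ` U \<longrightarrow> d \<in> cls ` V"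
    unfolding imp_sq_def mem_Collect_eq by blast+
  from cC obtain x where x: "x \<in> Y" "c = cls x" unfolding classes_iff by (elim bexE) (rule that)
  have "x \<in> box Y Ri (box Y Rm ((Y - U) \<union> V))" unfolding box_def[of Y Ri] mem_Collect_eq
  proof (intro conjI allI impI)
    show "x \<in> Y" by (fact x(1))
    fix w assume xw: "Ri x w"
    show "w \<in> box Y Rm ((Y - U) \<union> V)" unfolding box_def mem_Collect_eq
    proof (intro conjI allI impI)
      show "w \<in> Y" using Ri_in[OF xw] by simp
      fix z assume wz: "Rm w z"
      have zY: "z \<in> Y" using Rm_in[OF wz] by simp
      have st: "Rm_star Ri Rm x z" unfolding Rm_star_def using xw wz by blast
      show "z \<in> (Y - U) \<union> V"
      proof (cases "z \<in> U")
        case True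
        have "rho_Rm Y Ri Rm c (cls z)" unfolding x(2) rhoRm[OF x(1) zY]
          using Ri_refl[OF zY] st by blast
        moreover have "cls z \<in> cls ` U" using True by (rule imageI)
        ultimately have "cls z \<in> cls ` V" using cH by blast
        then have "z \<in> V" using cls_mem_up[OF V zY] by simp
        then show ?thesis by simp
      next
        case False then show ?thesis using zY by simp
      qed
    qed
  qed
  then show "c \<in> cls ` box Y Ri (box Y Rm ((Y - U) \<union> V))" unfolding x(2) by (rule imageI)
next
  fix c assume "c \<in> cls ` box Y Ri (box Y Rm ((Y - U) \<union> V))"
  then obtain x where x: "x \<in> box Y Ri (box Y Rm ((Y - U) \<union> V))" "c = cls x"
    unfolding image_iff by (elim bexE) (rule that)
  have xY: "x \<in> Y" and xH: "\<forall>w. Ri x w \<longrightarrow> w \<in> box Y Rm ((Y - U) \<union> V)"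
    using x(1) unfolding box_def[of Y Ri] mem_Collect_eq by blast+
  show "c \<in> imp_sq (classes Y Ri) (rho_Rm Y Ri Rm) (cls ` U) (cls ` V)"
    unfolding imp_sq_def mem_Collect_eq
  proof (intro conjI allI impI)
    show "c \<in> classes Y Ri" unfolding classes_iff using xY x(2) by (rule bexI[rotated])
    fix d assume d: "rho_Rm Y Ri Rm c d \<and> d \<in> cls ` U"
    then obtain z where z: "z \<in> U" "d = cls z" unfolding image_iff by (elim conjE bexE) (rule that)
    have zY: "z \<in> Y" using U z(1) unfolding up_def by blast
    have "rho_Rm Y Ri Rm (cls x) (cls z)" using d x(2) z(2) by simp
    then obtain z' where z': "Ri z' z" "Ri z z'" "Rm_star Ri Rm x z'" using rhoRm[OF xY zY] by blast
    then obtain w where w: "Ri x w" "Rm w z'" unfolding Rm_star_def by blast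
    have "w \<in> box Y Rm ((Y - U) \<union> V)" using xH w(1) by blast
    then have z'in: "z' \<in> (Y - U) \<union> V" using w(2) unfolding box_def by blast
    have "z' \<in> U" using U z(1) z'(2) unfolding up_def by blast
    then have "z' \<in> V" using z'in by blast
    then have "z \<in> V" using V z'(1) unfolding up_def by blast
    then show "d \<in> cls ` V" unfolding z(2) by (rule imageI)
  qed
qed

lemma gen_m: "general_mframe (classes Y Ri) (rho_Ri Y Ri) (rho_Rm Y Ri Rm) (rho_P Y Ri Q)"
  unfolding general_mframe_def
proof (intro conjI)
  show "\<forall>x y. rho_Ri Y Ri x y \<longrightarrow> x \<in> classes Y Ri \<and> y \<in> classes Y Ri"
    unfolding rho_Ri_def classes_def by blast
  show "\<forall>x y. rho_Rm Y Ri Rm x y \<longrightarrow> x \<in> classes Y Ri \<and> y \<in> classes Y Ri"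
    unfolding rho_Rm_def classes_def by blast
  show "\<forall>x\<in>classes Y Ri. rho_Ri Y Ri x x" unfolding classes_def rho_Ri_def using Ri_refl by blast
  show "\<forall>x y z. rho_Ri Y Ri x y \<and> rho_Ri Y Ri y z \<longrightarrow> rho_Ri Y Ri x z"
  proof (intro allI impI, elim conjE)
    fix c d e assume a: "rho_Ri Y Ri c d" "rho_Ri Y Ri d e"
    then obtain x y y' z where "x\<in>Y" "y\<in>Y" "y'\<in>Y" "z\<in>Y" "c = cls x" "d = cls y" "d = cls y'"
      "e = cls z" "Ri x y" "Ri y' z" unfolding rho_Ri_def by metis
    then show "rho_Ri Y Ri c e" using rhoRi cls_eq Ri_trans by metis
  qed
  show "\<forall>x y. rho_Ri Y Ri x y \<and> rho_Ri Y Ri y x \<longrightarrow> x = y"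
  proof (intro allI impI, elim conjE)
    fix c d assume a: "rho_Ri Y Ri c d" "rho_Ri Y Ri d c"
    then obtain x y where "x\<in>Y" "y\<in>Y" "c = cls x" "d = cls y" unfolding rho_Ri_def by metis
    then show "c = d" using a rhoRi cls_eq by metis
  qed
  show "\<forall>x y z. rho_Ri Y Ri x y \<and> rho_Rm Y Ri Rm y z \<longrightarrow> rho_Rm Y Ri Rm x z"
  proof (intro allI impI, elim conjE)
    fix c d e assume a: "rho_Ri Y Ri c d" "rho_Rm Y Ri Rm d e"
    then obtain x y z where xyz: "x\<in>Y" "y\<in>Y" "z\<in>Y" "c = cls x" "d = cls y" "e = cls z"
      unfolding rho_Ri_def rho_Rm_def by metis
    then have "Ri x y" using a rhoRi by blast
    moreover obtain z' where "Ri z' z" "Ri z z'" "Rm_star Ri Rm y z'" using a xyz rhoRm by blast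
    ultimately show "rho_Rm Y Ri Rm c e" using xyz rhoRm unfolding Rm_star_def using Ri_trans by meson
  qed
  show "\<forall>a\<in>rho_P Y Ri Q. upset (classes Y Ri) (rho_Ri Y Ri) a"
    unfolding rhoP
  proof
    fix A assume "A \<in> (\<lambda>U. cls ` U) ` UQ"
    then obtain U where U: "U \<in> UQ" "A = cls ` U" by blast
    then have uU: "up U" unfolding UQ_def by blast
    show "upset (classes Y Ri) (rho_Ri Y Ri) A"
      unfolding upset_def
    proof (intro conjI allI impI)
      show "A \<subseteq> classes Y Ri" using U UQ_sub img_sub by blast
      fix c d assume cd: "c \<in> A \<and> rho_Ri Y Ri c d"
      then obtain x y where xy: "x\<in>Y" "y\<in>Y" "c = cls x" "d = cls y" unfolding rho_Ri_def by metis
      then have "Ri x y" "x \<in> U" using cd rhoRi cls_mem_up[OF uU] U by blast+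
      then have "y \<in> U" using uU unfolding up_def by blast
      then show "d \<in> A" using xy U by blast
    qed
  qed
  show "classes Y Ri \<in> rho_P Y Ri Q"
  proof -
    have "up Y" unfolding up_def using Ri_in by blast
    then have "Y \<in> UQ" unfolding UQ_def using Q_top by blast
    then show ?thesis unfolding rhoP classes_def by blast
  qed
  show "{} \<in> rho_P Y Ri Q"
    unfolding rhoP UQ_def using Q_empty by (auto simp: up_def)
  show "\<forall>a\<in>rho_P Y Ri Q. \<forall>b\<in>rho_P Y Ri Q. a \<inter> b \<in> rho_P Y Ri Q \<and> a \<union> b \<in> rho_P Y Ri Q \<and>
      imp_le (classes Y Ri) (rho_Ri Y Ri) a b \<in> rho_P Y Ri Q \<and>
      imp_sq (classes Y Ri) (rho_Rm Y Ri Rm) a b \<in> rho_P Y Ri Q"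
    unfolding rhoP
  proof (intro ballI conjI)
    fix A B assume A: "A \<in> (\<lambda>U. cls ` U) ` UQ" and B: "B \<in> (\<lambda>U. cls ` U) ` UQ"
    obtain U where U: "U \<in> UQ" "A = cls ` U" using A unfolding image_iff by (elim bexE) (rule that)
    obtain V where V: "V \<in> UQ" "B = cls ` V" using B unfolding image_iff by (elim bexE) (rule that)
    have UV: "U \<in> Q" "up U" "V \<in> Q" "up V" "A = cls ` U" "B = cls ` V"
      using U V unfolding UQ_def by simp_all
    have e1: "A \<inter> B = cls ` (U \<inter> V)" using img_int[OF UV(2,4)] UV(5,6) by simp
    have i1: "U \<inter> V \<in> UQ" using up_int[OF UV(2,4)] Q_int[OF UV(1,3)] unfolding UQ_def by simp
    show "A \<inter> B \<in> (\<lambda>U. cls ` U) ` UQ" unfolding e1 using i1 by (rule imageI)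
    have e2: "A \<union> B = cls ` (U \<union> V)" using UV(5,6) by (simp add: image_Un)
    have i2: "U \<union> V \<in> UQ" using up_un[OF UV(2,4)] Q_un[OF UV(1,3)] unfolding UQ_def by simp
    show "A \<union> B \<in> (\<lambda>U. cls ` U) ` UQ" unfolding e2 using i2 by (rule imageI)
    have W: "box Y Ri ((Y - U) \<union> V) \<in> UQ" unfolding UQ_def
      using box_up Q_boxi[OF Q_un[OF Q_compl[OF UV(1)] UV(3)]] by blast
    show "imp_le (classes Y Ri) (rho_Ri Y Ri) A B \<in> (\<lambda>U. cls ` U) ` UQ"
      unfolding UV(5,6) imp_le_eq[OF UV(2,4)] using W by (rule imageI)
    have W2: "box Y Ri (box Y Rm ((Y - U) \<union> V)) \<in> UQ" unfolding UQ_def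
      using box_up Q_boxi[OF Q_boxm[OF Q_un[OF Q_compl[OF UV(1)] UV(3)]]] by blast
    show "imp_sq (classes Y Ri) (rho_Rm Y Ri Rm) A B \<in> (\<lambda>U. cls ` U) ` UQ"
      unfolding UV(5,6) imp_sq_eq[OF UV(2,4)] using W2 by (rule imageI)
  qed
qed

lemma box_int: "box Y R (a \<inter> b) = box Y R a \<inter> box Y R b" unfolding box_def by blast
lemma box_mono: "a \<subseteq> b \<Longrightarrow> box Y R a \<subseteq> box Y R b" unfolding box_def by blast
lemma box_subi: "box Y Ri a \<subseteq> a" unfolding box_def using Ri_refl by blast
lemma box_topi: "box Y Ri Y = Y" unfolding box_def using Ri_in Ri_refl by blast
lemma box_topm: "box Y Rm Y = Y" unfolding box_def using Rm_in by blast
lemma box_emptyi: "box Y Ri {} = {}" using box_subi by blast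
lemma box_un_box: "box Y Ri (box Y Ri a \<union> box Y Ri b) = box Y Ri a \<union> box Y Ri b"
  using up_box up_un box_up by blast

lemma acc2:
  assumes "w \<in> Y" "y \<in> Y" "finite G"
    "G \<subseteq> {d\<in>Q. w \<in> box Y Rm d} \<union> {box Y Ri a | a. a \<in> Q \<and> y \<in> box Y Ri a}
         \<union> {Y - box Y Ri b | b. b \<in> Q \<and> y \<notin> box Y Ri b}"
  shows "\<exists>d\<in>Q. \<exists>a\<in>Q. \<exists>b\<in>Q. w \<in> box Y Rm d \<and> y \<in> box Y Ri a \<and> y \<notin> box Y Ri b \<and>
           Y \<inter> d \<inter> box Y Ri a - box Y Ri b \<subseteq> \<Inter>G"
  using assms(3,4)
proof (induction G rule: finite_induct)
  case empty
  have "w \<in> box Y Rm Y" "y \<in> box Y Ri Y" "y \<notin> box Y Ri {}"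
    using assms(1,2) box_topm box_topi box_emptyi by simp_all
  moreover have "Y \<inter> Y \<inter> box Y Ri Y - box Y Ri {} \<subseteq> \<Inter>{}" by simp
  ultimately show ?case using Q_top Q_empty by blast
next
  case (insert g G)
  from insert.prems have gS: "g \<in> {d\<in>Q. w \<in> box Y Rm d} \<union> {box Y Ri a | a. a \<in> Q \<and> y \<in> box Y Ri a}
         \<union> {Y - box Y Ri b | b. b \<in> Q \<and> y \<notin> box Y Ri b}"
    and GS: "G \<subseteq> {d\<in>Q. w \<in> box Y Rm d} \<union> {box Y Ri a | a. a \<in> Q \<and> y \<in> box Y Ri a}
         \<union> {Y - box Y Ri b | b. b \<in> Q \<and> y \<notin> box Y Ri b}"
    unfolding insert_subset by blast+
  from insert.IH[OF GS] obtain d a b where dab: "d\<in>Q" "a\<in>Q" "b\<in>Q" "w \<in> box Y Rm d" "y \<in> box Y Ri a" "y \<notin> box Y Ri b"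
     "Y \<inter> d \<inter> box Y Ri a - box Y Ri b \<subseteq> \<Inter>G" by (elim bexE conjE) (rule that; assumption)
  have g: "g \<in> {d\<in>Q. w \<in> box Y Rm d} \<or> g \<in> {box Y Ri a | a. a \<in> Q \<and> y \<in> box Y Ri a}
         \<or> g \<in> {Y - box Y Ri b | b. b \<in> Q \<and> y \<notin> box Y Ri b}" using gS by (simp only: Un_iff disj_assoc)
  then show ?case
  proof (elim disjE)
    assume g: "g \<in> {d\<in>Q. w \<in> box Y Rm d}"
    have h1: "d \<inter> g \<in> Q" using g dab(1) Q_int by blast
    have h2: "w \<in> box Y Rm (d \<inter> g)" using g dab(4) box_int[of Rm d g] by blast
    have h3: "Y \<inter> (d \<inter> g) \<inter> box Y Ri a - box Y Ri b \<subseteq> \<Inter>(insert g G)" using dab(7) by blast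
    show ?case using h1 h2 h3 dab(2,3,5,6) by blast
  next
    assume "g \<in> {box Y Ri a | a. a \<in> Q \<and> y \<in> box Y Ri a}"
    then obtain a' where g: "g = box Y Ri a'" "a' \<in> Q" "y \<in> box Y Ri a'" by blast
    have h1: "a \<inter> a' \<in> Q" using g dab(2) Q_int by blast
    have e: "box Y Ri (a \<inter> a') = box Y Ri a \<inter> box Y Ri a'" by (rule box_int)
    have h2: "y \<in> box Y Ri (a \<inter> a')" using g dab(5) e by blast
    have h3: "Y \<inter> d \<inter> box Y Ri (a \<inter> a') - box Y Ri b \<subseteq> \<Inter>(insert g G)" using dab(7) e g(1) by blast
    show ?case using h1 h2 h3 dab(1,3,4,6) by blast
  next
    assume "g \<in> {Y - box Y Ri b | b. b \<in> Q \<and> y \<notin> box Y Ri b}"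
    then obtain b' where g: "g = Y - box Y Ri b'" "b' \<in> Q" "y \<notin> box Y Ri b'" by blast
    let ?b = "box Y Ri b \<union> box Y Ri b'"
    have h1: "?b \<in> Q" using g dab(3) Q_un Q_boxi by blast
    have e: "box Y Ri ?b = ?b" by (rule box_un_box)
    have h2: "y \<notin> box Y Ri ?b" using g dab(6) e by blast
    have h3: "Y \<inter> d \<inter> box Y Ri a - box Y Ri ?b \<subseteq> \<Inter>(insert g G)" using dab(7) e g(1) by blast
    show ?case using h1 h2 h3 dab(1,2,4,5) by blast
  qed
qed

lemma acc1:
  assumes "x \<in> Y" "y \<in> Y" "finite G"
    "G \<subseteq> {c\<in>Q. x \<in> box Y Ri c} \<union> {Y - box Y Rm ((Y - box Y Ri a) \<union> box Y Ri b) | a b.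
           a \<in> Q \<and> b \<in> Q \<and> y \<in> box Y Ri a \<and> y \<notin> box Y Ri b}"
  shows "\<exists>c\<in>Q. \<exists>a\<in>Q. \<exists>b\<in>Q. x \<in> box Y Ri c \<and> y \<in> box Y Ri a \<and> y \<notin> box Y Ri b \<and>
           Y \<inter> c - box Y Rm ((Y - box Y Ri a) \<union> box Y Ri b) \<subseteq> \<Inter>G"
  using assms(3,4)
proof (induction G rule: finite_induct)
  case empty
  have "x \<in> box Y Ri Y" "y \<in> box Y Ri Y" "y \<notin> box Y Ri {}"
    using assms(1,2) box_topi box_emptyi by simp_all
  moreover have "Y \<inter> Y - box Y Rm ((Y - box Y Ri Y) \<union> box Y Ri {}) \<subseteq> \<Inter>{}" by simp
  ultimately show ?case using Q_top Q_empty by blast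
next
  case (insert g G)
  from insert.prems have gS: "g \<in> {c\<in>Q. x \<in> box Y Ri c} \<union> {Y - box Y Rm ((Y - box Y Ri a) \<union> box Y Ri b) | a b.
           a \<in> Q \<and> b \<in> Q \<and> y \<in> box Y Ri a \<and> y \<notin> box Y Ri b}"
    and GS: "G \<subseteq> {c\<in>Q. x \<in> box Y Ri c} \<union> {Y - box Y Rm ((Y - box Y Ri a) \<union> box Y Ri b) | a b.
           a \<in> Q \<and> b \<in> Q \<and> y \<in> box Y Ri a \<and> y \<notin> box Y Ri b}"
    unfolding insert_subset by blast+
  from insert.IH[OF GS] obtain c a b where cab: "c\<in>Q" "a\<in>Q" "b\<in>Q" "x \<in> box Y Ri c" "y \<in> box Y Ri a" "y \<notin> box Y Ri b"
     "Y \<inter> c - box Y Rm ((Y - box Y Ri a) \<union> box Y Ri b) \<subseteq> \<Inter>G" by (elim bexE conjE) (rule that; assumption)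
  have g: "g \<in> {c\<in>Q. x \<in> box Y Ri c} \<or> g \<in> {Y - box Y Rm ((Y - box Y Ri a) \<union> box Y Ri b) | a b.
           a \<in> Q \<and> b \<in> Q \<and> y \<in> box Y Ri a \<and> y \<notin> box Y Ri b}" using gS by (simp only: Un_iff disj_assoc)
  then show ?case
  proof (elim disjE)
    assume g: "g \<in> {c\<in>Q. x \<in> box Y Ri c}"
    have h1: "c \<inter> g \<in> Q" using g cab(1) Q_int by blast
    have h2: "x \<in> box Y Ri (c \<inter> g)" using g cab(4) box_int[of Ri c g] by blast
    have h3: "Y \<inter> (c \<inter> g) - box Y Rm ((Y - box Y Ri a) \<union> box Y Ri b) \<subseteq> \<Inter>(insert g G)"
      using cab(7) by blast
    show ?case using h1 h2 h3 cab(2,3,5,6) by blast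
  next
    assume "g \<in> {Y - box Y Rm ((Y - box Y Ri a) \<union> box Y Ri b) | a b.
           a \<in> Q \<and> b \<in> Q \<and> y \<in> box Y Ri a \<and> y \<notin> box Y Ri b}"
    then obtain a' b' where g: "g = Y - box Y Rm ((Y - box Y Ri a') \<union> box Y Ri b')"
      "a' \<in> Q" "b' \<in> Q" "y \<in> box Y Ri a'" "y \<notin> box Y Ri b'" by blast
    let ?a = "a \<inter> a'" and ?b = "box Y Ri b \<union> box Y Ri b'"
    have e1: "box Y Ri ?a = box Y Ri a \<inter> box Y Ri a'" by (rule box_int)
    have e2: "box Y Ri ?b = box Y Ri b \<union> box Y Ri b'" by (rule box_un_box)
    have m1: "box Y Rm ((Y - box Y Ri a) \<union> box Y Ri b) \<subseteq> box Y Rm ((Y - box Y Ri ?a) \<union> box Y Ri ?b)"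
      by (rule box_mono) (unfold e1 e2, blast)
    have m2: "box Y Rm ((Y - box Y Ri a') \<union> box Y Ri b') \<subseteq> box Y Rm ((Y - box Y Ri ?a) \<union> box Y Ri ?b)"
      by (rule box_mono) (unfold e1 e2, blast)
    have h1: "?a \<in> Q" using g cab(2) Q_int by blast
    have h1': "?b \<in> Q" using g cab(3) Q_un Q_boxi by blast
    have h2: "y \<in> box Y Ri ?a" using g cab(5) e1 by blast
    have h2': "y \<notin> box Y Ri ?b" using g cab(6) e2 by blast
    have h3: "Y \<inter> c - box Y Rm ((Y - box Y Ri ?a) \<union> box Y Ri ?b) \<subseteq> \<Inter>(insert g G)"
      using cab(7) m1 m2 g(1) by blast
    show ?case using h1 h1' h2 h2' h3 cab(1,4) by blast
  qed
qed

end

locale S4d = S4q +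
  assumes D: "descriptive_S4K Y Ri Rm Q"
begin

lemma tRi: "x \<in> Y \<Longrightarrow> y \<in> Y \<Longrightarrow> Ri x y \<longleftrightarrow> (\<forall>a\<in>Q. x \<in> box Y Ri a \<longrightarrow> y \<in> a)"
  using D unfolding descriptive_S4K_def by blast
lemma tRm: "x \<in> Y \<Longrightarrow> y \<in> Y \<Longrightarrow> Rm x y \<longleftrightarrow> (\<forall>a\<in>Q. x \<in> box Y Rm a \<longrightarrow> y \<in> a)"
  using D unfolding descriptive_S4K_def by blast
lemma cpt: "F \<subseteq> Q \<Longrightarrow> fip Y F \<Longrightarrow> Y \<inter> \<Inter>F \<noteq> {}"
  using D unfolding descriptive_S4K_def by blast

lemma sep:
  assumes x: "x \<in> Y" and y: "y \<in> Y" and n: "\<not> (\<exists>z'. Ri z' y \<and> Ri y z' \<and> Rm_star Ri Rm x z')"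
  shows "\<exists>a\<in>Q. \<exists>b\<in>Q. x \<in> box Y Ri (box Y Rm ((Y - box Y Ri a) \<union> box Y Ri b)) \<and>
           y \<in> box Y Ri a \<and> y \<notin> box Y Ri b"
proof -
  define F1 where "F1 = {c\<in>Q. x \<in> box Y Ri c}"
  define F2 where "F2 = {Y - box Y Rm ((Y - box Y Ri a) \<union> box Y Ri b) | a b.
           a \<in> Q \<and> b \<in> Q \<and> y \<in> box Y Ri a \<and> y \<notin> box Y Ri b}"
  have FQ: "F1 \<union> F2 \<subseteq> Q"
  proof
    fix g assume "g \<in> F1 \<union> F2"
    then show "g \<in> Q"
    proof
      assume "g \<in> F1" then show ?thesis unfolding F1_def by blast
    next
      assume "g \<in> F2"
      then obtain a b where "g = Y - box Y Rm ((Y - box Y Ri a) \<union> box Y Ri b)" "a \<in> Q" "b \<in> Q"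
        unfolding F2_def by blast
      then show ?thesis using Q_compl Q_boxm Q_un Q_boxi by simp
    qed
  qed
  have nf: "\<not> fip Y (F1 \<union> F2)"
  proof
    assume "fip Y (F1 \<union> F2)"
    then obtain w where w: "w \<in> Y" "w \<in> \<Inter>(F1 \<union> F2)" using cpt[OF FQ] by blast
    have xw: "Ri x w" unfolding tRi[OF x w(1)]
    proof (intro ballI impI)
      fix a assume "a \<in> Q" "x \<in> box Y Ri a"
      then have "a \<in> F1 \<union> F2" unfolding F1_def by blast
      then show "w \<in> a" using w(2) by blast
    qed
    have wn: "w \<notin> box Y Rm ((Y - box Y Ri a) \<union> box Y Ri b)"
      if "a \<in> Q" "b \<in> Q" "y \<in> box Y Ri a" "y \<notin> box Y Ri b" for a b
    proof -
      have "Y - box Y Rm ((Y - box Y Ri a) \<union> box Y Ri b) \<in> F1 \<union> F2"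
        unfolding F2_def using that by blast
      then show ?thesis using w(2) by blast
    qed
    define G1 where "G1 = {d\<in>Q. w \<in> box Y Rm d}"
    define G2 where "G2 = {box Y Ri a | a. a \<in> Q \<and> y \<in> box Y Ri a}"
    define G3 where "G3 = {Y - box Y Ri b | b. b \<in> Q \<and> y \<notin> box Y Ri b}"
    have GQ: "G1 \<union> G2 \<union> G3 \<subseteq> Q"
    proof
      fix g assume "g \<in> G1 \<union> G2 \<union> G3"
      then show "g \<in> Q" unfolding G1_def G2_def G3_def using Q_compl Q_boxi by blast
    qed
    have "fip Y (G1 \<union> G2 \<union> G3)" unfolding fip_def
    proof (intro allI impI)
      fix G assume G: "G \<subseteq> G1 \<union> G2 \<union> G3 \<and> finite G"
      then have G': "finite G" "G \<subseteq> {d\<in>Q. w \<in> box Y Rm d} \<union> {box Y Ri a | a. a \<in> Q \<and> y \<in> box Y Ri a}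
         \<union> {Y - box Y Ri b | b. b \<in> Q \<and> y \<notin> box Y Ri b}" unfolding G1_def G2_def G3_def by blast+
      obtain d a b where dab: "d\<in>Q" "a\<in>Q" "b\<in>Q" "w \<in> box Y Rm d" "y \<in> box Y Ri a" "y \<notin> box Y Ri b"
        "Y \<inter> d \<inter> box Y Ri a - box Y Ri b \<subseteq> \<Inter>G"
        using acc2[OF w(1) y G'] by (elim bexE conjE) (rule that; assumption)
      have "w \<notin> box Y Rm ((Y - box Y Ri a) \<union> box Y Ri b)" using wn dab(2,3,5,6) by blast
      then obtain z where z: "Rm w z" "z \<notin> (Y - box Y Ri a) \<union> box Y Ri b"
        using w(1) unfolding box_def by blast
      have zY: "z \<in> Y" using Rm_in[OF z(1)] by simp
      have zd: "z \<in> d" using z(1) dab(4) unfolding box_def by blast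
      have "z \<in> Y \<inter> d \<inter> box Y Ri a - box Y Ri b" using zY zd z(2) by blast
      then have "z \<in> Y \<inter> \<Inter>G" using zY dab(7) by blast
      then show "Y \<inter> \<Inter>G \<noteq> {}" by blast
    qed
    then obtain z where z: "z \<in> Y" "z \<in> \<Inter>(G1 \<union> G2 \<union> G3)" using cpt[OF GQ] by blast
    have "Rm w z" unfolding tRm[OF w(1) z(1)]
    proof (intro ballI impI)
      fix d assume "d \<in> Q" "w \<in> box Y Rm d"
      then have "d \<in> G1 \<union> G2 \<union> G3" unfolding G1_def by blast
      then show "z \<in> d" using z(2) by blast
    qed
    moreover have "Ri y z" unfolding tRi[OF y z(1)]
    proof (intro ballI impI)
      fix a assume "a \<in> Q" "y \<in> box Y Ri a"
      then have "box Y Ri a \<in> G1 \<union> G2 \<union> G3" unfolding G2_def by blast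
      then have "z \<in> box Y Ri a" using z(2) by blast
      then show "z \<in> a" using box_subi by blast
    qed
    moreover have "Ri z y" unfolding tRi[OF z(1) y]
    proof (intro ballI impI)
      fix a assume a: "a \<in> Q" "z \<in> box Y Ri a"
      show "y \<in> a"
      proof (rule ccontr)
        assume "y \<notin> a"
        then have "y \<notin> box Y Ri a" using box_subi by blast
        then have "Y - box Y Ri a \<in> G1 \<union> G2 \<union> G3" unfolding G3_def using a(1) by blast
        then have "z \<in> Y - box Y Ri a" using z(2) by blast
        then show False using a(2) by blast
      qed
    qed
    moreover have "Rm_star Ri Rm x z" unfolding Rm_star_def using xw \<open>Rm w z\<close> by blast
    ultimately show False using n by blast
  qed
  then obtain G where G: "G \<subseteq> F1 \<union> F2" "finite G" "Y \<inter> \<Inter>G = {}" unfolding fip_def by blast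
  have G': "G \<subseteq> {c\<in>Q. x \<in> box Y Ri c} \<union> {Y - box Y Rm ((Y - box Y Ri a) \<union> box Y Ri b) | a b.
           a \<in> Q \<and> b \<in> Q \<and> y \<in> box Y Ri a \<and> y \<notin> box Y Ri b}"
    using G(1) unfolding F1_def F2_def by blast
  obtain c a b where cab: "c\<in>Q" "a\<in>Q" "b\<in>Q" "x \<in> box Y Ri c" "y \<in> box Y Ri a" "y \<notin> box Y Ri b"
     "Y \<inter> c - box Y Rm ((Y - box Y Ri a) \<union> box Y Ri b) \<subseteq> \<Inter>G"
    using acc1[OF x y G(2) G'] by (elim bexE conjE) (rule that; assumption)
  have sub: "Y \<inter> c \<subseteq> box Y Rm ((Y - box Y Ri a) \<union> box Y Ri b)" using cab(7) G(3) by blast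
  define S where "S = box Y Rm ((Y - box Y Ri a) \<union> box Y Ri b)"
  have "x \<in> box Y Ri S"
    unfolding box_def[of Y Ri S] mem_Collect_eq
  proof (intro conjI allI impI)
    show "x \<in> Y" by (fact x)
    fix w assume xw: "Ri x w"
    then have "w \<in> Y" "w \<in> c" using cab(4) Ri_in unfolding box_def by blast+
    then show "w \<in> S" using sub unfolding S_def by blast
  qed
  then have "x \<in> box Y Ri (box Y Rm ((Y - box Y Ri a) \<union> box Y Ri b))" unfolding S_def .
  then show ?thesis using cab(2,3,5,6) by blast
qed


lemma desc_m: "descriptive_mframe (classes Y Ri) (rho_Ri Y Ri) (rho_Rm Y Ri Rm) (rho_P Y Ri Q)"
  unfolding descriptive_mframe_def
proof (intro conjI)
  show "general_mframe (classes Y Ri) (rho_Ri Y Ri) (rho_Rm Y Ri Rm) (rho_P Y Ri Q)" by (rule gen_m)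
  let ?C = "classes Y Ri" and ?P = "rho_P Y Ri Q"
  show "\<forall>F. F \<subseteq> ?P \<union> {?C - a | a. a \<in> ?P} \<and> fip ?C F \<longrightarrow> ?C \<inter> \<Inter>F \<noteq> {}"
  proof (intro allI impI, elim conjE)
    fix F assume FP: "F \<subseteq> ?P \<union> {?C - a | a. a \<in> ?P}" and ff: "fip ?C F"
    define pi where "pi A = {x\<in>Y. cls x \<in> A}" for A
    have piQ: "pi A \<in> Q \<and> A \<subseteq> ?C" if "A \<in> F" for A
    proof -
      have "A \<in> ?P \<or> A \<in> {?C - a | a. a \<in> ?P}" using FP that by blast
      then show ?thesis
      proof
        assume "A \<in> ?P"
        then obtain U where U: "U \<in> UQ" "A = cls ` U" unfolding rhoP image_iff by (elim bexE) (rule that)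
        have uU: "up U" "U \<in> Q" using U(1) unfolding UQ_def by simp_all
        have "pi A = U"
        proof (intro set_eqI iffI)
          fix x assume "x \<in> pi A"
          then have "x \<in> Y" "cls x \<in> cls ` U" unfolding pi_def U(2) by simp_all
          then show "x \<in> U" using cls_mem_up[OF uU(1)] by blast
        next
          fix x assume "x \<in> U"
          moreover have "U \<subseteq> Y" using uU(1) unfolding up_def by blast
          ultimately show "x \<in> pi A" unfolding pi_def U(2) by blast
        qed
        moreover have "A \<subseteq> ?C" using U(2) img_sub uU(1) unfolding up_def by blast
        ultimately show ?thesis using uU(2) by simp
      next
        assume "A \<in> {?C - a | a. a \<in> ?P}"
        then obtain A0 where A0: "A = ?C - A0" "A0 \<in> ?P" by blast
        then obtain U where U: "U \<in> UQ" "A0 = cls ` U" unfolding rhoP image_iff by blast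
        have uU: "up U" "U \<in> Q" using U(1) unfolding UQ_def by simp_all
        have "pi A = Y - U"
        proof (intro set_eqI iffI)
          fix x assume "x \<in> pi A"
          then have "x \<in> Y" "cls x \<notin> cls ` U" unfolding pi_def A0(1) U(2) by simp_all
          then show "x \<in> Y - U" using cls_mem_up[OF uU(1)] by blast
        next
          fix x assume x: "x \<in> Y - U"
          then have "cls x \<notin> cls ` U" using cls_mem_up[OF uU(1)] by blast
          moreover have "cls x \<in> ?C" using x classes_iff by blast
          ultimately show "x \<in> pi A" unfolding pi_def A0(1) U(2) using x by blast
        qed
        then show ?thesis using Q_compl[OF uU(2)] A0(1) by simp
      qed
    qed
    have FQ: "pi ` F \<subseteq> Q" using piQ by blast
    have "fip Y (pi ` F)" unfolding fip_def
    proof (intro allI impI)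
      fix G' assume G': "G' \<subseteq> pi ` F \<and> finite G'"
      then obtain G where G: "G \<subseteq> F" "finite G" "G' = pi ` G"
        using finite_subset_image[of G' pi F] by blast
      have "?C \<inter> \<Inter>G \<noteq> {}" using ff G(1,2) unfolding fip_def by blast
      then obtain c where c: "c \<in> ?C" "c \<in> \<Inter>G" by blast
      then obtain x where x: "x \<in> Y" "c = cls x" unfolding classes_iff by blast
      have "x \<in> pi A" if "A \<in> G" for A using x c(2) that unfolding pi_def by blast
      then have "x \<in> Y \<inter> \<Inter>G'" using x(1) G(3) by blast
      then show "Y \<inter> \<Inter>G' \<noteq> {}" by blast
    qed
    then obtain x where x: "x \<in> Y" "x \<in> \<Inter>(pi ` F)" using cpt[OF FQ] by blast
    have "cls x \<in> A" if "A \<in> F" for A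
    proof -
      have "x \<in> pi A" using x(2) that by blast
      then show ?thesis unfolding pi_def by blast
    qed
    moreover have "cls x \<in> ?C" using x(1) classes_iff by blast
    ultimately have "cls x \<in> ?C \<inter> \<Inter>F" by blast
    then show "?C \<inter> \<Inter>F \<noteq> {}" by blast
  qed
  show "\<forall>c\<in>?C. \<forall>d\<in>?C. \<not> rho_Ri Y Ri c d \<longrightarrow> (\<exists>a\<in>?P. c \<in> a \<and> d \<notin> a)"
  proof (intro ballI impI)
    fix c d assume c: "c \<in> ?C" and d: "d \<in> ?C" and n: "\<not> rho_Ri Y Ri c d"
    obtain x where x: "x \<in> Y" "c = cls x" using c unfolding classes_iff by blast
    obtain y where y: "y \<in> Y" "d = cls y" using d unfolding classes_iff by blast
    have "\<not> Ri x y" using n rhoRi[OF x(1) y(1)] x(2) y(2) by simp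
    then obtain a where a: "a \<in> Q" "x \<in> box Y Ri a" "y \<notin> a" using tRi[OF x(1) y(1)] by blast
    have ybox: "y \<notin> box Y Ri a" using a(3) box_subi by blast
    have "cls ` box Y Ri a \<in> ?P" unfolding rho_P_def using a(1) by blast
    moreover have "c \<in> cls ` box Y Ri a" unfolding x(2) using a(2) by (rule imageI)
    moreover have "d \<notin> cls ` box Y Ri a" unfolding y(2) using cls_mem_up[OF box_up y(1)] ybox by simp
    ultimately show "\<exists>a\<in>?P. c \<in> a \<and> d \<notin> a" by blast
  qed
  show "\<forall>c\<in>?C. \<forall>d\<in>?C. \<not> rho_Rm Y Ri Rm c d \<longrightarrow>
        (\<exists>a\<in>?P. \<exists>b\<in>?P. c \<in> imp_sq ?C (rho_Rm Y Ri Rm) a b \<and> d \<in> a \<and> d \<notin> b)"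
  proof (intro ballI impI)
    fix c d assume c: "c \<in> ?C" and d: "d \<in> ?C" and n: "\<not> rho_Rm Y Ri Rm c d"
    obtain x where x: "x \<in> Y" "c = cls x" using c unfolding classes_iff by blast
    obtain y where y: "y \<in> Y" "d = cls y" using d unfolding classes_iff by blast
    have nn: "\<not> (\<exists>z'. Ri z' y \<and> Ri y z' \<and> Rm_star Ri Rm x z')"
      using n rhoRm[OF x(1) y(1)] x(2) y(2) by simp
    obtain a b where ab: "a \<in> Q" "b \<in> Q" "x \<in> box Y Ri (box Y Rm ((Y - box Y Ri a) \<union> box Y Ri b))"
      "y \<in> box Y Ri a" "y \<notin> box Y Ri b"
      using sep[OF x(1) y(1) nn] by (elim bexE conjE) (rule that; assumption)
    have A: "cls ` box Y Ri a \<in> ?P" unfolding rho_P_def using ab(1) by blast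
    have B: "cls ` box Y Ri b \<in> ?P" unfolding rho_P_def using ab(2) by blast
    have "c \<in> imp_sq ?C (rho_Rm Y Ri Rm) (cls ` box Y Ri a) (cls ` box Y Ri b)"
      unfolding imp_sq_eq[OF box_up box_up] x(2) using ab(3) by (rule imageI)
    moreover have "d \<in> cls ` box Y Ri a" unfolding y(2) using ab(4) by (rule imageI)
    moreover have "d \<notin> cls ` box Y Ri b" unfolding y(2) using cls_mem_up[OF box_up y(1)] ab(5) by simp
    ultimately show "\<exists>a\<in>?P. \<exists>b\<in>?P. c \<in> imp_sq ?C (rho_Rm Y Ri Rm) a b \<and> d \<in> a \<and> d \<notin> b"
      using A B by blast
  qed
qed

end


theorem proposition4p10:
  fixes X :: "'a set" and le sq :: "'a \<Rightarrow> 'a \<Rightarrow> bool" and P :: "'a set set"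
    and Y :: "'b set" and Ri Rm :: "'b \<Rightarrow> 'b \<Rightarrow> bool" and Q :: "'b set set"
  shows "(descriptive_mframe X le sq P \<longrightarrow> descriptive_S4K X le sq (sigma_hat X P)) \<and>
         (descriptive_S4K Y Ri Rm Q \<longrightarrow>
            descriptive_mframe (classes Y Ri) (rho_Ri Y Ri) (rho_Rm Y Ri Rm) (rho_P Y Ri Q))"
proof (intro conjI impI)
  assume "descriptive_mframe X le sq P"
  then show "descriptive_S4K X le sq (sigma_hat X P)" by (rule part1)
next
  assume D: "descriptive_S4K Y Ri Rm Q"
  interpret S4d Y Ri Rm Q
  proof
    show "general_S4K Y Ri Rm Q" using D unfolding descriptive_S4K_def by (elim conjE)
    show "descriptive_S4K Y Ri Rm Q" by (fact D)
  qed
  show "descriptive_mframe (classes Y Ri) (rho_Ri Y Ri) (rho_Rm Y Ri Rm) (rho_P Y Ri Q)"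
    by (rule desc_m)
qed

end
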